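(* In the setting of the context, for every iteration $k\geq 0$, every batch size $m\in\{1,\dots,|\mathrm{OD}|\}$ and every step size $\gamma_k\in[0,1]$, the iterates of the batched SOFW method satisfy \[ \mathbb{E}\bigl[\Psi(\Theta x_{k+1})\,\big|\,x_k\bigr]\;\leq\;\Psi(\Theta x_k)-\frac{\gamma_k}{|\mathrm{OD}|}\,g(x_k)+\frac{\gamma_k^2}{2|\mathrm{OD}|}\,C^{\otimes}_\Psi, \] where $g(x)=\sum_{w\in\mathrm{OD}}g^{(w)}(x)$ and $g^{(w)}(x)=\max_{s\in\mathcal{X}^{(w)}}\langle\nabla\Psi(\Theta x),\,\Theta(x^{[w]}-s^{[w]})\rangle$ is the block Frank–Wolfe gap. In particular the right-hand side does not depend on $m$.
   Context: Let $\mathcal{G}=(\mathcal{V},\mathcal{E})$ be a finite directed graph. Let $\mathrm{OD}$ be a finite nonempty set of origin–destination pairs $w=(i,j)$ with $i,j\in\mathcal{V}$, each with a demand $d_w>0$. For each $w\in\mathrm{OD}$ let $\mathcal{P}_w$ be a finite nonempty set of directed paths from $i$ to $j$, and let $\mathcal{P}=\bigsqcup_w \mathcal{P}_w$. A path-flow vector $x\in\mathbb{R}^{|\mathcal{P}|}$ is written as a concatenation of blocks $x=(x^{(w)})_{w\in\mathrm{OD}}$ with $x^{(w)}\in\mathbb{R}^{|\mathcal{P}_w|}$. The feasible set is the product $\mathcal{X}=\prod_{w}\mathcal{X}^{(w)}$, where $\mathcal{X}^{(w)}=\{x^{(w)}\geq 0 : \sum_{p\in\mathcal{P}_w}x_p=d_w\}$.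 Let $\Theta\in\{0,1\}^{|\mathcal{E}|\times|\mathcal{P}|}$ be the edge–path incidence matrix ($\Theta_{e,p}=1$ iff edge $e$ lies on path $p$), so edge flows are $F(x)=\Theta x$. Let $\Psi:\mathbb{R}^{|\mathcal{E}|}\to\mathbb{R}$ be convex and continuously differentiable. Lifting notation: for $w\in\mathrm{OD}$ and $x\in\mathbb{R}^{|\mathcal{P}|}$, $x^{[w]}\in\mathbb{R}^{|\mathcal{P}|}$ denotes the vector that agrees with $x$ on the coordinates indexed by $\mathcal{P}_w$ and is zero elsewhere; similarly, for $s^{(w)}\in\mathcal{X}^{(w)}$, $s^{[w]}$ is its zero-padded lift to $\mathbb{R}^{|\mathcal{P}|}$. Block curvature constants: for $w\in\mathrm{OD}$, \[ C^{(w)}_\Psi := \sup\frac{2}{\gamma^2}\Bigl[\Psi(\Theta y)-\Psi(\Theta x)-\langle\nabla\Psi(\Theta x),\,\Theta(y-x)\rangle\Bigr], \] the supremum over $x\in\mathcal{X}$, $s^{(w)}\in\mathcal{X}^{(w)}$, $\gamma\in(0,1]$, with $y=x+\gamma(s^{[w]}-x^{[w]})$; these are assumed finite, and $C^{\otimes}_\Psi:=\sum_{w\in\mathrm{OD}}C^{(w)}_\Psi$. Batched SOFW method: given $x_k\in\mathcal{X}$, draw $\mathcal{I}_k\subset\mathrm{OD}$ uniformly at random among all subsets of size $m$, independently of the past. For each $w\in\mathcal{I}_k$ choose $s_k^{(w)}\in\arg\min_{s\in\mathcal{X}^{(w)}}\langle\nabla\Psi(\Theta x_k),\Theta s^{[w]}\rangle$.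 Set $d_k=\frac1m\sum_{w\in\mathcal{I}_k}(s_k^{[w]}-x_k^{[w]})$ and $x_{k+1}=x_k+\gamma_k d_k$. *)

theory Defs
  imports "HOL-Probability.Probability"
begin

text \<open>Setting: vertices of type 'v (a finite set V), edges indexed by a finite type 'e
  via an injective endpoint map into V x V (so the edge set is a set of ordered pairs),
  OD pairs are pairs of vertices, and paths are indexed by a finite type 'p whose
  elements are exactly the disjoint union of the pth sets P_w.  Block vectors s^(w) are represented by their
  zero-padded lifts s^[w].\<close>

definition is_dpath :: "('v \<times> 'v) set \<Rightarrow> 'v \<Rightarrow> 'v \<Rightarrow> 'v list \<Rightarrow> bool" where
  "is_dpath Ed i j vs \<longleftrightarrow> vs \<noteq> [] \<and> hd vs = i \<and> last vs = j \<and> distinct vs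
     \<and> set (zip vs (tl vs)) \<subseteq> Ed"

definition incidence :: "('e \<Rightarrow> 'v \<times> 'v) \<Rightarrow> ('p \<Rightarrow> 'v list) \<Rightarrow> 'e \<Rightarrow> 'p \<Rightarrow> real" where
  "incidence ends pth e p = (if ends e \<in> set (zip (pth p) (tl (pth p))) then 1 else 0)"

definition edge_flow :: "('e::finite \<Rightarrow> 'v \<times> 'v) \<Rightarrow> ('p::finite \<Rightarrow> 'v list) \<Rightarrow> real^'p \<Rightarrow> real^'e" where
  "edge_flow ends pth x = (\<chi> e. \<Sum>p\<in>UNIV. incidence ends pth e p * x$p)"

definition lift :: "('w \<Rightarrow> 'p set) \<Rightarrow> 'w \<Rightarrow> real^'p::finite \<Rightarrow> real^'p" where
  "lift Pw w x = (\<chi> p. if p \<in> Pw w then x$p else 0)"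

definition feasible :: "'w set \<Rightarrow> ('w \<Rightarrow> 'p set) \<Rightarrow> ('w \<Rightarrow> real) \<Rightarrow> (real^'p::finite) set" where
  "feasible OD Pw d = {x. (\<forall>p. 0 \<le> x$p) \<and> (\<forall>w\<in>OD. (\<Sum>p\<in>Pw w. x$p) = d w)}"

definition block_feasible :: "('w \<Rightarrow> 'p set) \<Rightarrow> ('w \<Rightarrow> real) \<Rightarrow> 'w \<Rightarrow> (real^'p::finite) set" where
  "block_feasible Pw d w = {s. (\<forall>p. 0 \<le> s$p) \<and> (\<forall>p. p \<notin> Pw w \<longrightarrow> s$p = 0)
      \<and> (\<Sum>p\<in>Pw w. s$p) = d w}"

text \<open>The set whose supremum defines the block curvature constant C^(w).
  Here F is the edge-flow map x \<mapsto> Theta x and G the gradient of Psi.\<close>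
definition curv_set :: "(real^'e::finite \<Rightarrow> real) \<Rightarrow> (real^'e \<Rightarrow> real^'e) \<Rightarrow> (real^'p::finite \<Rightarrow> real^'e)
    \<Rightarrow> 'w set \<Rightarrow> ('w \<Rightarrow> 'p set) \<Rightarrow> ('w \<Rightarrow> real) \<Rightarrow> 'w \<Rightarrow> real set" where
  "curv_set Psi G F OD Pw d w =
     {2 / \<gamma>^2 * (Psi (F y) - Psi (F x) - G (F x) \<bullet> F (y - x)) | x s \<gamma> y.
        x \<in> feasible OD Pw d \<and> s \<in> block_feasible Pw d w \<and> 0 < \<gamma> \<and> \<gamma> \<le> 1
        \<and> y = x + \<gamma> *\<^sub>R (s - lift Pw w x)}"

definition block_curv where
  "block_curv Psi G F OD Pw d w = Sup (curv_set Psi G F OD Pw d w)"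

definition total_curv where
  "total_curv Psi G F OD Pw d = (\<Sum>w\<in>OD. block_curv Psi G F OD Pw d w)"

definition block_gap :: "(real^'e::finite \<Rightarrow> real^'e) \<Rightarrow> (real^'p::finite \<Rightarrow> real^'e)
    \<Rightarrow> ('w \<Rightarrow> 'p set) \<Rightarrow> ('w \<Rightarrow> real) \<Rightarrow> 'w \<Rightarrow> real^'p \<Rightarrow> real" where
  "block_gap G F Pw d w x = (SUP s\<in>block_feasible Pw d w. G (F x) \<bullet> F (lift Pw w x - s))"

definition fw_gap where
  "fw_gap G F OD Pw d x = (\<Sum>w\<in>OD. block_gap G F Pw d w x)"

definition batch_pmf :: "'w set \<Rightarrow> nat \<Rightarrow> 'w set pmf" where
  "batch_pmf OD m = pmf_of_set {I. I \<subseteq> OD \<and> card I = m}"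

text \<open>Distribution of x_{k+1} given x_k = x, for a selection s I w of block minimisers
  (which may depend on the drawn batch I).\<close>
definition sofw_next :: "'w set \<Rightarrow> ('w \<Rightarrow> 'p set) \<Rightarrow> nat \<Rightarrow> real
    \<Rightarrow> ('w set \<Rightarrow> 'w \<Rightarrow> real^'p::finite) \<Rightarrow> real^'p \<Rightarrow> (real^'p) pmf" where
  "sofw_next OD Pw m \<gamma> s x =
     map_pmf (\<lambda>I. x + \<gamma> *\<^sub>R ((1 / real m) *\<^sub>R (\<Sum>w\<in>I. s I w - lift Pw w x))) (batch_pmf OD m)"

end

theory Submission imports Defs begin

lemma count_containing:
  assumes "finite A" "w \<in> A" "1 \<le> m"
  shows "card {I. (I \<subseteq> A \<and> card I = m) \<and> w \<in> I} = (card A - 1) choose (m - 1)"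
proof -
  have fin: "finite (A - {w})" using assms by auto
  have eq: "{I. (I \<subseteq> A \<and> card I = m) \<and> w \<in> I} = insert w ` {J. J \<subseteq> A - {w} \<and> card J = m - 1}"
  proof (intro equalityI subsetI)
    fix I assume I: "I \<in> {I. (I \<subseteq> A \<and> card I = m) \<and> w \<in> I}"
    then have "I = insert w (I - {w})" by auto
    moreover have "I - {w} \<in> {J. J \<subseteq> A - {w} \<and> card J = m - 1}"
      using I assms(1) by (auto simp: card_Diff_singleton finite_subset)
    ultimately show "I \<in> insert w ` {J. J \<subseteq> A - {w} \<and> card J = m - 1}" by blast
  next
    fix I assume "I \<in> insert w ` {J. J \<subseteq> A - {w} \<and> card J = m - 1}"
    then obtain J where J: "J \<subseteq> A - {w}" "card J = m - 1" "I = insert w J" by auto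
    have "finite J" using J(1) fin finite_subset by blast
    have "w \<notin> J" using J(1) by auto
    then have "card I = m" using J assms(3) \<open>finite J\<close> by simp
    then show "I \<in> {I. (I \<subseteq> A \<and> card I = m) \<and> w \<in> I}" using J assms(2) by auto
  qed
  have inj: "inj_on (insert w) {J. J \<subseteq> A - {w} \<and> card J = m - 1}"
    by (rule inj_onI) blast
  show ?thesis unfolding eq card_image[OF inj] n_subsets[OF fin]
    using assms by (simp add: card_Diff_singleton)
qed

lemma sum_subsets:
  fixes h :: "'a \<Rightarrow> real"
  assumes "finite A" "1 \<le> m"
  shows "(\<Sum>I\<in>{I. I \<subseteq> A \<and> card I = m}. \<Sum>w\<in>I. h w)
        = real ((card A - 1) choose (m - 1)) * (\<Sum>w\<in>A. h w)"
proof -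
  let ?S = "{I. I \<subseteq> A \<and> card I = m}"
  have finS: "finite ?S" using assms(1) by (auto intro: finite_subset[of _ "Pow A"])
  have "(\<Sum>I\<in>?S. \<Sum>w\<in>I. h w) = (\<Sum>I\<in>?S. \<Sum>w\<in>{w. w \<in> A \<and> w \<in> I}. h w)"
    by (rule sum.cong) (auto intro!: sum.cong)
  also have "\<dots> = (\<Sum>w\<in>A. \<Sum>I\<in>{I. I \<in> ?S \<and> w \<in> I}. h w)"
    by (rule sum.swap_restrict[OF finS assms(1)])
  also have "\<dots> = (\<Sum>w\<in>A. real ((card A - 1) choose (m - 1)) * h w)"
    using count_containing[OF assms(1) _ assms(2)] by (intro sum.cong) auto
  finally show ?thesis by (simp add: sum_distrib_left)
qed

lemma avg_subsets:
  fixes h :: "'a \<Rightarrow> real"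
  assumes "finite A" "1 \<le> m" "m \<le> card A"
  shows "(\<Sum>I\<in>{I. I \<subseteq> A \<and> card I = m}. (1 / real m) * (\<Sum>w\<in>I. h w))
          / real (card {I. I \<subseteq> A \<and> card I = m})
        = (\<Sum>w\<in>A. h w) / real (card A)"
proof -
  let ?n = "card A"
  have ab: "m * (?n choose m) = ?n * ((?n - 1) choose (m - 1))"
    using binomial_absorption[of "m - 1" ?n] assms(2) by simp
  have pos: "(?n choose m) > 0" using assms(3) by simp
  have np: "?n > 0" using assms by simp
  have "real m * real (?n choose m) = real ?n * real ((?n - 1) choose (m - 1))"
    using ab by (metis of_nat_mult)
  then show ?thesis
    unfolding sum_distrib_left[symmetric] sum_subsets[OF assms(1,2)] n_subsets[OF assms(1)]
    using pos np assms(2)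
    by (simp add: field_simps)
qed

lemma edge_flow_linear: "linear (edge_flow ends pth)"
  unfolding edge_flow_def
  by (rule linearI) (simp_all add: vec_eq_iff algebra_simps sum.distrib sum_distrib_left)

theorem mainTheorem2:
  fixes V :: "'v set"
    and ends :: "'e::finite \<Rightarrow> 'v \<times> 'v"
    and OD :: "('v \<times> 'v) set"
    and d :: "'v \<times> 'v \<Rightarrow> real"
    and Pw :: "'v \<times> 'v \<Rightarrow> 'p::finite set"
    and pth :: "'p \<Rightarrow> 'v list"
    and Psi :: "real^'e \<Rightarrow> real"
    and G :: "real^'e \<Rightarrow> real^'e"
    and x :: "real^'p"
    and m :: nat
    and \<gamma> :: real
    and s :: "('v \<times> 'v) set \<Rightarrow> 'v \<times> 'v \<Rightarrow> real^'p"
  assumes "finite V"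
    and "inj ends"
    and "range ends \<subseteq> V \<times> V"
    and "finite OD" and "OD \<noteq> {}" and "OD \<subseteq> V \<times> V"
    and "\<forall>w\<in>OD. 0 < d w"
    and "\<forall>w\<in>OD. Pw w \<noteq> {}"
    and "\<forall>w\<in>OD. \<forall>w'\<in>OD. w \<noteq> w' \<longrightarrow> Pw w \<inter> Pw w' = {}"
    and "(\<Union>w\<in>OD. Pw w) = UNIV"
    and "\<forall>w\<in>OD. \<forall>p\<in>Pw w. is_dpath (range ends) (fst w) (snd w) (pth p)"
    and "convex_on UNIV Psi"
    and "\<forall>z. (Psi has_derivative (\<lambda>h. G z \<bullet> h)) (at z)"
    and "continuous_on UNIV G"
    and "\<forall>w\<in>OD. bdd_above (curv_set Psi G (edge_flow ends pth) OD Pw d w)"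
    and "x \<in> feasible OD Pw d"
    and "1 \<le> m" and "m \<le> card OD"
    and "0 \<le> \<gamma>" and "\<gamma> \<le> 1"
    and "\<forall>I. I \<subseteq> OD \<and> card I = m \<longrightarrow> (\<forall>w\<in>I. s I w \<in> block_feasible Pw d w \<and>
           (\<forall>s'\<in>block_feasible Pw d w.
              G (edge_flow ends pth x) \<bullet> edge_flow ends pth (s I w)
                \<le> G (edge_flow ends pth x) \<bullet> edge_flow ends pth s'))"
  shows "measure_pmf.expectation (sofw_next OD Pw m \<gamma> s x) (\<lambda>y. Psi (edge_flow ends pth y))
     \<le> Psi (edge_flow ends pth x)
        - \<gamma> / real (card OD) * fw_gap G (edge_flow ends pth) OD Pw d x
        + \<gamma>^2 / (2 * real (card OD)) * total_curv Psi G (edge_flow ends pth) OD Pw d"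
  proof -
  define F where "F = edge_flow ends pth"
  define g0 where "g0 = G (F x)"
  define S where "S = {I. I \<subseteq> OD \<and> card I = m}"
  define B where "B = (\<lambda>w. Psi (F x) - \<gamma> * block_gap G F Pw d w x + \<gamma>^2 / 2 * block_curv Psi G F OD Pw d w)"
  note A = assms
  have lin: "linear F" unfolding F_def by (rule edge_flow_linear)
  have finS: "finite S" unfolding S_def using A(4) by (auto intro: finite_subset[of _ "Pow OD"])
  have neS: "S \<noteq> {}" unfolding S_def
  proof -
    obtain I where "I \<subseteq> OD" "card I = m" using obtain_subset_with_card_n[OF A(18)] by metis
    then show "{I. I \<subseteq> OD \<and> card I = m} \<noteq> {}" by auto
  qed
  have key: "Psi (F (x + \<gamma> *\<^sub>R (s I w - lift Pw w x))) \<le> B w" if I: "I \<in> S" "w \<in> I" for I w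
  proof -
    have wOD: "w \<in> OD" using I unfolding S_def by auto
    have sI: "s I w \<in> block_feasible Pw d w"
      and smin: "\<And>s'. s' \<in> block_feasible Pw d w \<Longrightarrow> g0 \<bullet> F (s I w) \<le> g0 \<bullet> F s'"
      using A(21) I unfolding S_def g0_def F_def by auto
    have gap: "block_gap G F Pw d w x = g0 \<bullet> F (lift Pw w x - s I w)"
      unfolding block_gap_def g0_def[symmetric]
    proof (rule cSup_eq_maximum)
      show "g0 \<bullet> F (lift Pw w x - s I w) \<in> (\<lambda>s. g0 \<bullet> F (lift Pw w x - s)) ` block_feasible Pw d w"
        using sI by auto
    next
      fix v assume "v \<in> (\<lambda>s. g0 \<bullet> F (lift Pw w x - s)) ` block_feasible Pw d w"
      then obtain s' where s': "s' \<in> block_feasible Pw d w" "v = g0 \<bullet> F (lift Pw w x - s')" by auto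
      show "v \<le> g0 \<bullet> F (lift Pw w x - s I w)"
        using smin[OF s'(1)] s'(2) by (simp add: linear_diff[OF lin] inner_diff_right)
    qed
    define y where "y = x + \<gamma> *\<^sub>R (s I w - lift Pw w x)"
    have Fyx: "g0 \<bullet> F (y - x) = - \<gamma> * block_gap G F Pw d w x"
      unfolding gap y_def by (simp add: linear_diff[OF lin] linear_scale[OF lin] inner_diff_right algebra_simps)
    have curv: "Psi (F y) - Psi (F x) - g0 \<bullet> F (y - x) \<le> \<gamma>^2 / 2 * block_curv Psi G F OD Pw d w"
    proof (cases "\<gamma> = 0")
      case True then show ?thesis by (simp add: y_def linear_0[OF lin])
    next
      case False
      then have gp: "0 < \<gamma>" using A(19) by simp
      have mem: "2 / \<gamma>^2 * (Psi (F y) - Psi (F x) - g0 \<bullet> F (y - x)) \<in> curv_set Psi G F OD Pw d w"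
        unfolding curv_set_def g0_def using A(16) sI gp A(20) y_def by blast
      have "2 / \<gamma>^2 * (Psi (F y) - Psi (F x) - g0 \<bullet> F (y - x)) \<le> block_curv Psi G F OD Pw d w"
        unfolding block_curv_def by (rule cSup_upper[OF mem]) (use A(15) wOD F_def in auto)
      then show ?thesis using gp by (simp add: field_simps)
    qed
    show ?thesis using curv Fyx unfolding B_def y_def[symmetric] by simp
  qed
  have perI: "Psi (F (x + \<gamma> *\<^sub>R ((1 / real m) *\<^sub>R (\<Sum>w\<in>I. s I w - lift Pw w x))))
      \<le> (1 / real m) * (\<Sum>w\<in>I. B w)" if I: "I \<in> S" for I
  proof -
    have cI: "card I = m" using I unfolding S_def by auto
    have finI: "finite I" and neI: "I \<noteq> {}" using cI A(17) by (auto intro: card_ge_0_finite)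
    have mp: "real m > 0" using A(17) by simp
    have eq: "x + \<gamma> *\<^sub>R ((1 / real m) *\<^sub>R (\<Sum>w\<in>I. s I w - lift Pw w x))
        = (\<Sum>w\<in>I. (1 / real m) *\<^sub>R (x + \<gamma> *\<^sub>R (s I w - lift Pw w x)))"
    proof -
      have om: "(of_nat m :: real^'p) * x = real m *\<^sub>R x" by (simp add: vec_eq_iff of_nat_index)
      show ?thesis
        using cI mp by (simp add: scaleR_add_right sum.distrib scaleR_sum_right[symmetric] om)
    qed
    have "Psi (F (x + \<gamma> *\<^sub>R ((1 / real m) *\<^sub>R (\<Sum>w\<in>I. s I w - lift Pw w x))))
        = Psi (\<Sum>w\<in>I. (1 / real m) *\<^sub>R F (x + \<gamma> *\<^sub>R (s I w - lift Pw w x)))"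
      unfolding eq by (simp add: linear_sum[OF lin] linear_scale[OF lin])
    also have "\<dots> \<le> (\<Sum>w\<in>I. (1 / real m) * Psi (F (x + \<gamma> *\<^sub>R (s I w - lift Pw w x))))"
      by (rule convex_on_sum[OF finI neI A(12)]) (use cI mp in auto)
    also have "\<dots> \<le> (\<Sum>w\<in>I. (1 / real m) * B w)"
      by (rule sum_mono, rule mult_left_mono) (use key I mp in auto)
    finally show ?thesis by (simp add: sum_distrib_left)
  qed
  have "measure_pmf.expectation (sofw_next OD Pw m \<gamma> s x) (\<lambda>y. Psi (edge_flow ends pth y))
      = (\<Sum>I\<in>S. Psi (F (x + \<gamma> *\<^sub>R ((1 / real m) *\<^sub>R (\<Sum>w\<in>I. s I w - lift Pw w x))))) / real (card S)"
    unfolding sofw_next_def batch_pmf_def S_def[symmetric] F_def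
    by (simp add: integral_pmf_of_set[OF neS finS])
  also have "\<dots> \<le> (\<Sum>I\<in>S. (1 / real m) * (\<Sum>w\<in>I. B w)) / real (card S)"
    by (intro divide_right_mono sum_mono perI) auto
  also have "\<dots> = (\<Sum>w\<in>OD. B w) / real (card OD)"
    unfolding S_def by (rule avg_subsets[OF A(4) A(17) A(18)])
  also have "\<dots> = Psi (F x)
        - \<gamma> / real (card OD) * fw_gap G F OD Pw d x
        + \<gamma>^2 / (2 * real (card OD)) * total_curv Psi G F OD Pw d"
  proof -
    have np: "real (card OD) > 0" using A(4,5) by (simp add: card_gt_0_iff)
    have "(\<Sum>w\<in>OD. B w) = real (card OD) * Psi (F x) - \<gamma> * fw_gap G F OD Pw d x
         + \<gamma>^2 / 2 * total_curv Psi G F OD Pw d"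
      unfolding B_def fw_gap_def total_curv_def
      by (simp add: sum.distrib sum_subtractf sum_distrib_left)
    then show ?thesis using np by (simp add: field_simps)
  qed
  finally show ?thesis unfolding F_def .
qed

end
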